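(* Let $\varepsilon>0$, $c>0$, and let $G$ be a graph with $m$ edges, clique number $\omega=\omega(G)\ge 3$, and $t(G)\le c\,m^{1.5-\varepsilon}$. If $m\ge \big(10.06\,c\sqrt{\omega}\big)^{1/\varepsilon}$, then \[\Lambda_\ell(G)\le 2\left(1-\frac{1}{\omega}\right),\] where $\ell=\min\{n^+,\omega\}$.
   Context: For a simple graph $G$ on $n$ vertices and $m$ edges, let $\lambda_1\ge\cdots\ge\lambda_n$ be the eigenvalues of its adjacency matrix; $n^+$ is the number of positive eigenvalues. $\omega(G)$ is the clique number and $t(G)$ the number of triangles. $s_k(G)=\sum_{i=1}^k\lambda_i^2$ and $\Lambda_k(G)=s_k(G)/m$. *)

theory Defs
  imports "Jordan_Normal_Form.Char_Poly" "HOL-Library.Multiset"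
begin

definition simple_graph :: "nat \<Rightarrow> (nat \<Rightarrow> nat \<Rightarrow> bool) \<Rightarrow> bool" where
  "simple_graph n E \<longleftrightarrow> (\<forall>i<n. \<not> E i i) \<and> (\<forall>i<n. \<forall>j<n. E i j \<longleftrightarrow> E j i)"

definition adj_matrix :: "nat \<Rightarrow> (nat \<Rightarrow> nat \<Rightarrow> bool) \<Rightarrow> real mat" where
  "adj_matrix n E = mat n n (\<lambda>(i,j). if E i j then 1 else 0)"

definition eig_mset :: "nat \<Rightarrow> (nat \<Rightarrow> nat \<Rightarrow> bool) \<Rightarrow> real multiset" where
  "eig_mset n E = proots (char_poly (adj_matrix n E))"

(* eigenvalues in non-increasing order: lambda_1 = eigs ! 0 >= lambda_2 = eigs ! 1 >= ... *)
definition eigs :: "nat \<Rightarrow> (nat \<Rightarrow> nat \<Rightarrow> bool) \<Rightarrow> real list" where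
  "eigs n E = rev (sorted_list_of_multiset (eig_mset n E))"

definition n_pos :: "nat \<Rightarrow> (nat \<Rightarrow> nat \<Rightarrow> bool) \<Rightarrow> nat" where
  "n_pos n E = size (filter_mset (\<lambda>x. x > 0) (eig_mset n E))"

definition num_edges :: "nat \<Rightarrow> (nat \<Rightarrow> nat \<Rightarrow> bool) \<Rightarrow> nat" where
  "num_edges n E = card {(i,j). i < j \<and> j < n \<and> E i j}"

definition is_clique :: "nat \<Rightarrow> (nat \<Rightarrow> nat \<Rightarrow> bool) \<Rightarrow> nat set \<Rightarrow> bool" where
  "is_clique n E S \<longleftrightarrow> S \<subseteq> {..<n} \<and> (\<forall>i\<in>S. \<forall>j\<in>S. i \<noteq> j \<longrightarrow> E i j)"

definition clique_number :: "nat \<Rightarrow> (nat \<Rightarrow> nat \<Rightarrow> bool) \<Rightarrow> nat" where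
  "clique_number n E = Max (card ` {S. is_clique n E S})"

definition num_triangles :: "nat \<Rightarrow> (nat \<Rightarrow> nat \<Rightarrow> bool) \<Rightarrow> nat" where
  "num_triangles n E = card {S. is_clique n E S \<and> card S = 3}"

definition s_k :: "nat \<Rightarrow> (nat \<Rightarrow> nat \<Rightarrow> bool) \<Rightarrow> nat \<Rightarrow> real" where
  "s_k n E k = (\<Sum>i<k. (eigs n E ! i)^2)"

definition Lambda_k :: "nat \<Rightarrow> (nat \<Rightarrow> nat \<Rightarrow> bool) \<Rightarrow> nat \<Rightarrow> real" where
  "Lambda_k n E k = s_k n E k / real (num_edges n E)"

end

theory Submission
  imports Defs "Jordan_Normal_Form.Schur_Decomposition"
begin

lemma sym_eig_real:
  fixes A :: "real mat" and a :: complex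
  assumes A: "A \<in> carrier_mat n n" and sym: "\<And>i j. i < n \<Longrightarrow> j < n \<Longrightarrow> A $$ (i,j) = A $$ (j,i)"
    and ev: "eigenvector (map_mat complex_of_real A) v a"
  shows "Im a = 0"
proof -
  let ?B = "map_mat complex_of_real A"
  have v: "v \<in> carrier_vec n" and v0: "v \<noteq> 0\<^sub>v n" and eq: "?B *\<^sub>v v = a \<cdot>\<^sub>v v"
    using ev A unfolding eigenvector_def by auto
  have row: "(\<Sum>j<n. of_real (A $$ (i,j)) * v $ j) = a * v $ i" if "i < n" for i
  proof -
    have "(?B *\<^sub>v v) $ i = (a \<cdot>\<^sub>v v) $ i" using eq by simp
    thus ?thesis using that A v
      by (simp add: mult_mat_vec_def scalar_prod_def row_def atLeast0LessThan)
  qed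
  define D where "D = (\<Sum>i<n. \<Sum>j<n. of_real (A $$ (i,j)) * v $ j * cnj (v $ i))"
  define S where "S = (\<Sum>i<n. v $ i * cnj (v $ i))"
  have "D = (\<Sum>i<n. (\<Sum>j<n. of_real (A $$ (i,j)) * v $ j) * cnj (v $ i))"
    unfolding D_def by (simp add: sum_distrib_right)
  also have "\<dots> = (\<Sum>i<n. a * (v $ i * cnj (v $ i)))"
    by (intro sum.cong refl, simp add: row)
  finally have DS: "D = a * S" unfolding S_def by (simp add: sum_distrib_left)
  have "cnj D = (\<Sum>i<n. \<Sum>j<n. of_real (A $$ (i,j)) * cnj (v $ j) * v $ i)"
    unfolding D_def cnj_sum by (intro sum.cong refl) simp
  also have "\<dots> = (\<Sum>i<n. \<Sum>j<n. of_real (A $$ (j,i)) * cnj (v $ i) * v $ j)"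
    by (rule sum.swap)
  also have "\<dots> = D" unfolding D_def
    by (intro sum.cong refl) (simp add: sym)
  finally have Dr: "cnj D = D" .
  have Sr: "S = of_real (\<Sum>i<n. (cmod (v $ i))^2)" unfolding S_def
    by (simp only: of_real_sum complex_norm_square)
  have "\<exists>i<n. v $ i \<noteq> 0" using v v0 by (metis carrier_vecD eq_vecI index_zero_vec(1) index_zero_vec(2))
  then obtain i where i: "i < n" "v $ i \<noteq> 0" by auto
  have "(\<Sum>i<n. (cmod (v $ i))^2) > 0"
    by (rule sum_pos2[of _ i]) (use i in auto)
  then have S0: "S \<noteq> 0" "cnj S = S" unfolding Sr by (auto simp del: of_real_sum)
  have "cnj a * S = a * S" using Dr DS S0 by (metis complex_cnj_mult)
  then have "cnj a = a" using S0 by simp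
  thus ?thesis by (metis Reals_cnj_iff complex_is_Real_iff)
qed

lemma sym_char_poly_split:
  fixes A :: "real mat"
  assumes A: "A \<in> carrier_mat n n" and sym: "\<And>i j. i < n \<Longrightarrow> j < n \<Longrightarrow> A $$ (i,j) = A $$ (j,i)"
  shows "\<exists>es. char_poly A = (\<Prod>a\<leftarrow>es. [:-a,1:]) \<and> length es = n"
proof -
  let ?B = "map_mat complex_of_real A"
  have B: "?B \<in> carrier_mat n n" using A by auto
  obtain as where cp: "char_poly ?B = (\<Prod>a\<leftarrow>as. [:-a,1:])" and len: "length as = n"
    using char_poly_factorized[OF B] by blast
  have re: "of_real (Re a) = a" if "a \<in> set as" for a
  proof -
    have "poly (char_poly ?B) a = 0" unfolding cp using that
      by (simp add: poly_prod_list_zero_iff)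
    then have "eigenvalue ?B a" using eigenvalue_root_char_poly[OF B] by simp
    then obtain v where "eigenvector ?B v a" unfolding eigenvalue_def by blast
    from sym_eig_real[OF A sym this] show ?thesis by (simp add: complex_eq_iff)
  qed
  interpret h: map_poly_comm_ring_hom "of_real :: real \<Rightarrow> complex" ..
  have "map_poly of_real (\<Prod>a\<leftarrow>map Re as. [:-a,1:]) = (\<Prod>a\<leftarrow>as. [:-a,1:] :: complex poly)"
    using re
  proof (induction as)
    case (Cons a as)
    have r: "complex_of_real (Re a) = a" using Cons.prems by simp
    have "map_poly of_real [:-Re a,1:] = [:-complex_of_real (Re a),1::complex:]"
      by simp
    then have "map_poly of_real [:-Re a,1:] = [:-a,1::complex:]" by (simp only: r)
    moreover have "map_poly of_real (\<Prod>a\<leftarrow>map Re as. [:-a,1:]) = (\<Prod>a\<leftarrow>as. [:-a,1:] :: complex poly)"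
      using Cons by simp
    ultimately show ?case by (simp only: list.map prod_list.Cons h.hom_mult)
  qed simp
  also have "\<dots> = map_poly of_real (char_poly A)"
    using cp of_real_hom.char_poly_hom[OF A] by metis
  finally have eq: "map_poly of_real (\<Prod>a\<leftarrow>map Re as. [:-a,1:]) = map_poly (of_real :: real \<Rightarrow> complex) (char_poly A)" .
  have "char_poly A = map_poly Re (map_poly of_real (char_poly A))"
    by (simp add: map_poly_map_poly o_def)
  also have "\<dots> = map_poly Re (map_poly of_real (\<Prod>a\<leftarrow>map Re as. [:-a,1:]))" by (simp only: eq)
  also have "\<dots> = (\<Prod>a\<leftarrow>map Re as. [:-a,1:])" by (simp add: map_poly_map_poly o_def)
  finally show ?thesis using len by (intro exI[of _ "map Re as"]) simp
qed

definition tr :: "'a::comm_ring_1 mat \<Rightarrow> 'a" where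
  "tr A = (\<Sum>i<dim_row A. A $$ (i,i))"

lemma tr_comm:
  fixes X Y :: "'a::comm_ring_1 mat"
  assumes X: "X \<in> carrier_mat n m" and Y: "Y \<in> carrier_mat m n"
  shows "tr (X * Y) = tr (Y * X)"
proof -
  have "tr (X * Y) = (\<Sum>i<n. \<Sum>l<m. X $$ (i,l) * Y $$ (l,i))"
    unfolding tr_def using X Y by (simp add: scalar_prod_def atLeast0LessThan)
  also have "\<dots> = (\<Sum>l<m. \<Sum>i<n. Y $$ (l,i) * X $$ (i,l))"
    by (subst sum.swap) (simp add: mult.commute)
  also have "\<dots> = tr (Y * X)"
    unfolding tr_def using X Y by (simp add: scalar_prod_def atLeast0LessThan)
  finally show ?thesis .
qed

lemma upper_pow:
  fixes B :: "'a::comm_ring_1 mat"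
  assumes B: "B \<in> carrier_mat n n" and ut: "upper_triangular B"
  shows "upper_triangular (B ^\<^sub>m k) \<and> (\<forall>i<n. (B ^\<^sub>m k) $$ (i,i) = B $$ (i,i) ^ k)"
proof (induction k)
  case 0
  then show ?case using B by auto
next
  case (Suc k)
  let ?C = "B ^\<^sub>m k"
  have C: "?C \<in> carrier_mat n n" using B by simp
  have Cz: "?C $$ (i,l) = 0" if "l < i" "i < n" for i l
    using Suc.IH that C by auto
  have Bz: "B $$ (l,j) = 0" if "j < l" "l < n" for j l
    using ut that B by auto
  have ent: "(?C * B) $$ (i,j) = (\<Sum>l<n. ?C $$ (i,l) * B $$ (l,j))" if "i < n" "j < n" for i j
    using that C B by (simp add: scalar_prod_def atLeast0LessThan)
  have "upper_triangular (?C * B)"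
  proof (rule upper_triangularI)
    fix i j assume ji: "j < i" and i: "i < dim_row (?C * B)"
    then have i': "i < n" using C B by simp
    have "(\<Sum>l<n. ?C $$ (i,l) * B $$ (l,j)) = 0"
    proof (rule sum.neutral, intro ballI)
      fix l assume "l \<in> {..<n}"
      then show "?C $$ (i,l) * B $$ (l,j) = 0"
        using Cz[of l i] Bz[of j l] ji i' by (cases "l < i") auto
    qed
    then show "(?C * B) $$ (i,j) = 0" using ent[of i j] i' ji by simp
  qed
  moreover have "(?C * B) $$ (i,i) = B $$ (i,i) ^ Suc k" if i: "i < n" for i
  proof -
    have "(\<Sum>l<n. ?C $$ (i,l) * B $$ (l,i)) = ?C $$ (i,i) * B $$ (i,i)"
    proof -
      have "(\<Sum>l<n. ?C $$ (i,l) * B $$ (l,i)) = ?C $$ (i,i) * B $$ (i,i) + (\<Sum>l\<in>{..<n}-{i}. ?C $$ (i,l) * B $$ (l,i))"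
        using i by (subst sum.remove[of _ i]) auto
      also have "(\<Sum>l\<in>{..<n}-{i}. ?C $$ (i,l) * B $$ (l,i)) = 0"
      proof (rule sum.neutral, intro ballI)
        fix l assume "l \<in> {..<n}-{i}"
        then show "?C $$ (i,l) * B $$ (l,i) = 0"
          using Cz[of l i] Bz[of i l] i by (cases "l < i") auto
      qed
      finally show ?thesis by simp
    qed
    then show ?thesis using ent[of i i] i Suc.IH by simp
  qed
  ultimately show ?case by simp
qed

lemma tr_pow_eig:
  fixes A :: "real mat"
  assumes A: "A \<in> carrier_mat n n" and cp: "char_poly A = (\<Prod>e\<leftarrow>es. [:-e,1:])"
  shows "tr (A ^\<^sub>m k) = (\<Sum>e\<leftarrow>es. e ^ k)"
proof -
  obtain B P Q where sd: "schur_decomposition A es = (B,P,Q)" by (cases "schur_decomposition A es") auto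
  from schur_decomposition[OF A cp sd] have wit: "similar_mat_wit A B P Q"
    and ut: "upper_triangular B" and dg: "diag_mat B = es" by auto
  from wit A have Bc: "B \<in> carrier_mat n n" and Pc: "P \<in> carrier_mat n n" and Qc: "Q \<in> carrier_mat n n"
    and QP: "Q * P = 1\<^sub>m n"
    unfolding similar_mat_wit_def Let_def by auto
  let ?C = "B ^\<^sub>m k"
  have Cc: "?C \<in> carrier_mat n n" using Bc by simp
  have "tr (A ^\<^sub>m k) = tr (P * ?C * Q)" using similar_mat_wit_pow_id[OF wit] by simp
  also have "\<dots> = tr (Q * (P * ?C))" using Pc Cc Qc by (intro tr_comm[of _ n n]) auto
  also have "Q * (P * ?C) = (Q * P) * ?C" using Pc Cc Qc by (simp add: assoc_mult_mat)
  also have "\<dots> = ?C" using QP Cc by (simp add: left_mult_one_mat)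
  also have "tr ?C = (\<Sum>i<n. B $$ (i,i) ^ k)" unfolding tr_def using upper_pow[OF Bc ut, of k] Bc by simp
  also have "\<dots> = (\<Sum>e\<leftarrow>es. e ^ k)" unfolding dg[symmetric] diag_mat_def using Bc
    by (simp add: sum_set_upt_conv_sum_list_nat[symmetric] atLeast0LessThan comp_def)
  finally show ?thesis .
qed

lemma tr_adj2:
  assumes G: "simple_graph n E"
  shows "tr (adj_matrix n E ^\<^sub>m 2) = real (card {(i,j). i<n \<and> j<n \<and> E i j})"
proof -
  let ?A = "adj_matrix n E"
  have A: "?A \<in> carrier_mat n n" unfolding adj_matrix_def by simp
  have sym: "E i j \<longleftrightarrow> E j i" if "i < n" "j < n" for i j using G that unfolding simple_graph_def by auto
  have p: "?A ^\<^sub>m 2 = ?A * ?A" using A by (simp add: numeral_2_eq_2 left_mult_one_mat)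
  have "tr (?A ^\<^sub>m 2) = (\<Sum>i<n. \<Sum>j<n. of_bool (E i j))"
    unfolding p tr_def using A sym
    by (intro sum.cong refl) (auto simp: scalar_prod_def adj_matrix_def atLeast0LessThan of_bool_def simp del: sum_of_bool_eq intro!: sum.cong)
  also have "\<dots> = (\<Sum>(i,j)\<in>{..<n}\<times>{..<n}. of_bool (E i j))"
    by (simp only: sum.cartesian_product)
  also have "\<dots> = (\<Sum>p\<in>{..<n}\<times>{..<n}. of_bool (case p of (i,j) \<Rightarrow> E i j))"
    by (rule sum.cong) auto
  also have "\<dots> = real (card (({..<n}\<times>{..<n}) \<inter> {p. case p of (i,j) \<Rightarrow> E i j}))"
    by (rule sum_of_bool_eq) simp_all
  also have "({..<n}\<times>{..<n}) \<inter> {p. case p of (i,j) \<Rightarrow> E i j} = {(i,j). i<n \<and> j<n \<and> E i j}" by auto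
  finally show ?thesis .
qed

lemma tr_adj3:
  assumes G: "simple_graph n E"
  shows "tr (adj_matrix n E ^\<^sub>m 3) = real (card {(i,j,l). i<n \<and> j<n \<and> l<n \<and> E i j \<and> E j l \<and> E l i})"
proof -
  let ?A = "adj_matrix n E"
  have A: "?A \<in> carrier_mat n n" unfolding adj_matrix_def by simp
  have p: "?A ^\<^sub>m 3 = ?A * ?A * ?A" using A by (simp add: numeral_3_eq_3 left_mult_one_mat)
  have AA: "(?A * ?A) $$ (i,l) = (\<Sum>j<n. of_bool (E i j \<and> E j l))" if "i<n" "l<n" for i l
    using A that by (auto simp: scalar_prod_def adj_matrix_def atLeast0LessThan of_bool_def simp del: sum_of_bool_eq intro!: sum.cong)
  have "tr (?A ^\<^sub>m 3) = (\<Sum>i<n. \<Sum>l<n. \<Sum>j<n. of_bool (E i j \<and> E j l \<and> E l i))"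
    unfolding p tr_def using A AA
    by (intro sum.cong refl) (auto simp: scalar_prod_def adj_matrix_def atLeast0LessThan sum_distrib_right of_bool_def simp del: sum_of_bool_eq intro!: sum.cong)
  also have "\<dots> = (\<Sum>i<n. \<Sum>j<n. \<Sum>l<n. of_bool (E i j \<and> E j l \<and> E l i))"
    by (rule sum.cong[OF refl], rule sum.swap)
  also have "\<dots> = (\<Sum>(i,j,l)\<in>{..<n}\<times>{..<n}\<times>{..<n}. of_bool (E i j \<and> E j l \<and> E l i))"
    by (simp only: sum.cartesian_product)
  also have "\<dots> = (\<Sum>p\<in>{..<n}\<times>{..<n}\<times>{..<n}. of_bool (case p of (i,j,l) \<Rightarrow> E i j \<and> E j l \<and> E l i))"
    by (rule sum.cong) auto
  also have "\<dots> = real (card (({..<n}\<times>{..<n}\<times>{..<n}) \<inter> {p. case p of (i,j,l) \<Rightarrow> E i j \<and> E j l \<and> E l i}))"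
    by (rule sum_of_bool_eq) simp_all
  also have "({..<n}\<times>{..<n}\<times>{..<n}) \<inter> {p. case p of (i,j,l) \<Rightarrow> E i j \<and> E j l \<and> E l i} = {(i,j,l). i<n \<and> j<n \<and> l<n \<and> E i j \<and> E j l \<and> E l i}" by auto
  finally show ?thesis .
qed

lemma card_ordered_pairs:
  assumes G: "simple_graph n E"
  shows "card {(i,j). i<n \<and> j<n \<and> E i j} = 2 * num_edges n E"
proof -
  let ?U = "{(i,j). i<j \<and> j<n \<and> E i j}"
  let ?V = "{(i,j). j<i \<and> i<n \<and> E i j}"
  have fin: "finite ?U" by (rule finite_subset[of _ "{..<n} \<times> {..<n}"]) auto
  have eq: "{(i,j). i<n \<and> j<n \<and> E i j} = ?U \<union> ?V"
    using G unfolding simple_graph_def by (auto, metis linorder_neqE_nat)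
  have V: "?V = (\<lambda>(i,j). (j,i)) ` ?U"
    using G unfolding simple_graph_def by (auto simp: image_iff)
  have "card ?V = card ?U" unfolding V by (rule card_image) (auto simp: inj_on_def)
  moreover have "finite ?V" using fin V by simp
  moreover have "?U \<inter> ?V = {}" by auto
  ultimately have "card (?U \<union> ?V) = 2 * card ?U" using fin by (simp add: card_Un_disjoint)
  then show ?thesis unfolding eq num_edges_def by simp
qed

lemma card_ordered_triples:
  assumes G: "simple_graph n E"
  shows "card {(i,j,l). i<n \<and> j<n \<and> l<n \<and> E i j \<and> E j l \<and> E l i} = 6 * num_triangles n E"
proof -
  let ?T = "{(i,j,l). i<n \<and> j<n \<and> l<n \<and> E i j \<and> E j l \<and> E l i}"
  let ?K = "{S. is_clique n E S \<and> card S = 3}"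
  let ?f = "\<lambda>(i::nat,j::nat,l::nat). {i,j,l}"
  have irr: "\<not> E i i" if "i < n" for i using G that unfolding simple_graph_def by auto
  have sym: "E i j \<longleftrightarrow> E j i" if "i < n" "j < n" for i j using G that unfolding simple_graph_def by auto
  have finT: "finite ?T" by (rule finite_subset[of _ "{..<n} \<times> {..<n} \<times> {..<n}"]) auto
  have finK: "finite ?K" by (rule finite_subset[of _ "Pow {..<n}"]) (auto simp: is_clique_def)
  have Tdec: "?T = (\<Union>S\<in>?K. {x\<in>?T. ?f x = S})"
  proof (intro equalityI subsetI)
    fix x assume x: "x \<in> ?T"
    obtain i j l where xe: "x = (i,j,l)" by (cases x) auto
    have d: "i \<noteq> j" "j \<noteq> l" "l \<noteq> i" using x irr unfolding xe by auto
    have "is_clique n E {i,j,l}" using x sym unfolding xe is_clique_def by auto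
    moreover have "card {i,j,l} = 3" using d by auto
    ultimately show "x \<in> (\<Union>S\<in>?K. {x\<in>?T. ?f x = S})" using x xe by auto
  qed auto
  have fiber: "card {x\<in>?T. ?f x = S} = 6" if S: "S \<in> ?K" for S
  proof -
    obtain a b c where abc: "S = {a,b,c}" "a \<noteq> b" "a \<noteq> c" "b \<noteq> c"
      using S by (auto simp: card_3_iff)
    have cl: "a < n" "b < n" "c < n" "E a b" "E b c" "E a c"
      using S abc unfolding is_clique_def by auto
    have "{x\<in>?T. ?f x = S} = {(a,b,c),(a,c,b),(b,a,c),(b,c,a),(c,a,b),(c,b,a)}"
    proof (intro equalityI subsetI)
      fix x assume x: "x \<in> {x\<in>?T. ?f x = S}"
      obtain i j l where xe: "x = (i,j,l)" by (cases x) auto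
      have d: "i \<noteq> j" "j \<noteq> l" "l \<noteq> i" using x irr unfolding xe by auto
      have "{i,j,l} = {a,b,c}" using x abc unfolding xe by auto
      then have m: "i \<in> {a,b,c}" "j \<in> {a,b,c}" "l \<in> {a,b,c}" "a \<in> {i,j,l}" "b \<in> {i,j,l}" "c \<in> {i,j,l}" by blast+
      show "x \<in> {(a,b,c),(a,c,b),(b,a,c),(b,c,a),(c,a,b),(c,b,a)}"
        using d m unfolding xe by fastforce
    next
      fix x assume "x \<in> {(a,b,c),(a,c,b),(b,a,c),(b,c,a),(c,a,b),(c,b,a)}"
      then show "x \<in> {x\<in>?T. ?f x = S}" using cl sym abc by auto
    qed
    then show ?thesis using abc by simp
  qed
  have "card ?T = (\<Sum>S\<in>?K. card {x\<in>?T. ?f x = S})"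
    by (subst Tdec, rule card_UN_disjoint) (use finK finT in auto)
  also have "\<dots> = (\<Sum>S\<in>?K. 6)" using fiber by simp
  finally show ?thesis unfolding num_triangles_def by simp
qed

lemma CS:
  fixes a :: "'a \<Rightarrow> real"
  shows "(\<Sum>i\<in>I. a i * b i)\<^sup>2 \<le> (\<Sum>i\<in>I. (a i)\<^sup>2) * (\<Sum>i\<in>I. (b i)\<^sup>2)"
proof (cases "(\<Sum>i\<in>I. (b i)\<^sup>2) > 0")
  case False
  then consider "\<And>i. i\<in>I \<Longrightarrow> b i = 0" | "infinite I"
    by (metis (mono_tags, lifting) sum_pos2 zero_le_power2 zero_less_power2)
  thus ?thesis
    by fastforce
next
  case True
  define r where "r \<equiv> (\<Sum>i\<in>I. a i * b i) / (\<Sum>i\<in>I. (b i)\<^sup>2)"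
  have "0 \<le> (\<Sum>i\<in>I. (a i - r * b i)\<^sup>2)"
    by (simp add: sum_nonneg)
  also have "... = (\<Sum>i\<in>I. (a i)\<^sup>2) - 2 * r * (\<Sum>i\<in>I. a i * b i) + r\<^sup>2 * (\<Sum>i\<in>I. (b i)\<^sup>2)"
  proof -
    have "(\<Sum>i\<in>I. (a i - r * b i)\<^sup>2) = (\<Sum>i\<in>I. ((a i)\<^sup>2 - 2 * r * (a i * b i)) + r\<^sup>2 * (b i)\<^sup>2)"
      by (intro sum.cong refl) (simp add: power2_eq_square algebra_simps)
    also have "\<dots> = (\<Sum>i\<in>I. (a i)\<^sup>2) - 2 * r * (\<Sum>i\<in>I. a i * b i) + r\<^sup>2 * (\<Sum>i\<in>I. (b i)\<^sup>2)"
      by (simp only: sum.distrib sum_subtractf sum_distrib_left)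
    finally show ?thesis .
  qed
  also have "\<dots> = (\<Sum>i\<in>I. (a i)\<^sup>2) - ((\<Sum>i\<in>I. a i * b i))\<^sup>2 / (\<Sum>i\<in>I. (b i)\<^sup>2)"
    by (simp add: r_def power2_eq_square)
  finally have "0 \<le> (\<Sum>i\<in>I. (a i)\<^sup>2) - ((\<Sum>i\<in>I. a i * b i))\<^sup>2 / (\<Sum>i\<in>I. (b i)\<^sup>2)" .
  hence "((\<Sum>i\<in>I. a i * b i))\<^sup>2 / (\<Sum>i\<in>I. (b i)\<^sup>2) \<le> (\<Sum>i\<in>I. (a i)\<^sup>2)"
    by (simp add: le_diff_eq)
  thus "((\<Sum>i\<in>I. a i * b i))\<^sup>2 \<le> (\<Sum>i\<in>I. (a i)\<^sup>2) * (\<Sum>i\<in>I. (b i)\<^sup>2)"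
    by (simp add: pos_divide_le_eq True)
qed



lemma power_mean_3:
  fixes x :: "nat \<Rightarrow> real"
  assumes nn: "\<And>i. i < l \<Longrightarrow> x i \<ge> 0"
  shows "(\<Sum>i<l. x i ^ 2) ^ 3 \<le> real l * (\<Sum>i<l. x i ^ 3) ^ 2"
proof -
  let ?P = "\<Sum>i<l. x i ^ 2" and ?S = "\<Sum>i<l. x i" and ?C = "\<Sum>i<l. x i ^ 3"
  have a: "?P ^ 2 \<le> ?S * ?C"
  proof -
    have "?P = (\<Sum>i<l. sqrt (x i) * (x i * sqrt (x i)))"
      by (intro sum.cong refl) (use nn in \<open>simp add: power2_eq_square mult.assoc[symmetric]\<close>)
    moreover have "?S = (\<Sum>i<l. (sqrt (x i))^2)" using nn by simp
    moreover have "?C = (\<Sum>i<l. (x i * sqrt (x i))^2)"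
      by (intro sum.cong refl) (use nn in \<open>simp add: power_mult_distrib power3_eq_cube power2_eq_square\<close>)
    ultimately show ?thesis using CS[of "\<lambda>i. sqrt (x i)" "\<lambda>i. x i * sqrt (x i)" "{..<l}"] by simp
  qed
  have b: "?S ^ 2 \<le> real l * ?P"
    using CS[of "\<lambda>i. 1" x "{..<l}"] by simp
  have P0: "?P \<ge> 0" by (simp add: sum_nonneg)
  have S0: "?S \<ge> 0" using nn by (intro sum_nonneg) simp
  have C0: "?C \<ge> 0" using nn by (intro sum_nonneg) simp
  have "?P ^ 4 \<le> ?S ^ 2 * ?C ^ 2"
  proof -
    have "?P ^ 4 = (?P ^ 2) ^ 2" by simp
    also have "\<dots> \<le> (?S * ?C) ^ 2" using a P0 by (intro power_mono) auto
    finally show ?thesis by (simp add: power_mult_distrib)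
  qed
  also have "\<dots> \<le> real l * ?P * ?C ^ 2" using b by (intro mult_right_mono) auto
  finally have c: "?P * ?P ^ 3 \<le> ?P * (real l * ?C ^ 2)"
    by (simp add: algebra_simps eval_nat_numeral)
  show ?thesis
  proof (cases "?P = 0")
    case True then show ?thesis by simp
  next
    case False
    then have "?P > 0" using P0 by simp
    with c show ?thesis by simp
  qed
qed

lemma tail_cube:
  fixes x :: "nat \<Rightarrow> real"
  assumes fin: "finite J"
  shows "(\<Sum>i\<in>J. x i ^ 3) \<ge> - (sqrt (\<Sum>i\<in>J. x i ^ 2) * (\<Sum>i\<in>J. x i ^ 2))"
proof -
  let ?R = "\<Sum>i\<in>J. x i ^ 2"
  have t: "x i ^ 3 \<ge> - (sqrt ?R * x i ^ 2)" if i: "i \<in> J" for i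
  proof -
    have "x i ^ 2 \<le> ?R" using fin i by (intro member_le_sum) auto
    then have "\<bar>x i\<bar> \<le> sqrt ?R" using real_sqrt_le_mono by fastforce
    then have "\<bar>x i\<bar> * x i ^ 2 \<le> sqrt ?R * x i ^ 2" by (intro mult_right_mono) auto
    moreover have "x i ^ 3 \<ge> - (\<bar>x i\<bar> * x i ^ 2)"
      by (cases "x i \<ge> 0") (auto simp: power2_eq_square power3_eq_cube)
    ultimately show ?thesis by linarith
  qed
  have "(\<Sum>i\<in>J. x i ^ 3) \<ge> (\<Sum>i\<in>J. - (sqrt ?R * x i ^ 2))" using t by (intro sum_mono) auto
  then show ?thesis by (simp add: sum_negf sum_distrib_left)
qed

lemma key_num:
  fixes k :: nat assumes k: "k \<ge> 3"
  shows "20.12 * sqrt 2 * ((real k - 1) * sqrt (real k * (real k - 1)) - real k) \<ge> 6 * real k ^ 2"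
proof -
  have s2: "sqrt 2 \<ge> 1.41421" by (rule real_le_rsqrt) (simp add: power2_eq_square)
  show ?thesis
  proof (cases "k = 3")
    case True
    have s6: "sqrt 6 \<ge> 2.44948" by (rule real_le_rsqrt) (simp add: power2_eq_square)
    have "20.12 * 1.41421 * (2 * 2.44948 - 3) \<le> 20.12 * sqrt 2 * (2 * sqrt 6 - 3)"
      using s2 s6 by (intro mult_mono) auto
    then show ?thesis using True by simp
  next
    case False
    then have k4: "real k \<ge> 4" using k by simp
    have kk: "real k * real k \<ge> 4 * real k" using k4 by (intro mult_right_mono) auto
    have "sqrt (real k * (real k - 1)) \<ge> real k - 3/5"
      by (rule real_le_rsqrt) (use k4 in \<open>simp add: power2_eq_square algebra_simps\<close>)
    then have f1: "(real k - 1) * sqrt (real k * (real k - 1)) - real k \<ge> (real k - 1) * (real k - 3/5) - real k"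
      using k4 by (intro diff_right_mono mult_left_mono) auto
    have e1: "(real k - 1) * (real k - 3/5) - real k = real k * real k - 13/5 * real k + 3/5"
      by (simp add: field_simps)
    define Y where "Y = (real k - 1) * sqrt (real k * (real k - 1)) - real k"
    have Y: "Y \<ge> real k * real k - 13/5 * real k + 3/5" using f1 e1 unfolding Y_def by linarith
    have Y0: "Y \<ge> 0" using Y kk k4 by linarith
    have c: "20.12 * sqrt 2 \<ge> 28" using s2 by simp
    have "20.12 * sqrt 2 * Y \<ge> 28 * Y" using c Y0 by (intro mult_right_mono) auto
    moreover have "28 * Y \<ge> 6 * (real k * real k)" using Y kk k4 by linarith
    ultimately show ?thesis unfolding Y_def power2_eq_square by linarith
  qed
qed

lemma final_ineq:
  fixes M P R C D T l :: real and k :: nat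
  assumes k3: "k \<ge> 3" and M0: "M > 0" and PR: "P + R = M" and R0: "R \<ge> 0" and C0: "C \<ge> 0"
    and PC: "P ^ 3 \<le> l * C ^ 2" and l1: "1 \<le> l" and lw: "l \<le> real k"
    and DR: "D \<ge> - (sqrt R * R)" and TCD: "T = C + D"
    and Tb: "T \<le> 6 * ((M/2) * sqrt (M/2)) / (10.06 * sqrt (real k))"
  shows "P \<le> M * (1 - 1 / real k)"
proof (rule ccontr)
  assume "\<not> ?thesis"
  then have PQ: "P > M * (1 - 1 / real k)" by simp
  define w where "w = real k"
  have w3: "w \<ge> 3" using k3 unfolding w_def by simp
  define Q where "Q = M * (w - 1) / w"
  have Qe: "M * (1 - 1 / real k) = Q" unfolding Q_def w_def using w3 w_def by (simp add: field_simps)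
  have Q0: "Q > 0" unfolding Q_def using M0 w3 by simp
  have PQ': "P > Q" using PQ Qe by simp
  define sq where "sq = sqrt M"
  define a where "a = sqrt w"
  define b where "b = sqrt (w - 1)"
  have sq0: "sq > 0" unfolding sq_def using M0 by simp
  have a0: "a > 0" unfolding a_def using w3 by simp
  have b0: "b > 0" unfolding b_def using w3 by simp
  have sq2: "sq ^ 2 = M" unfolding sq_def using M0 by simp
  have a2: "a ^ 2 = w" unfolding a_def using w3 by simp
  have b2: "b ^ 2 = w - 1" unfolding b_def using w3 by simp
  define X where "X = M * sq * (w - 1) * b / w ^ 2"
  have X0: "X \<ge> 0" unfolding X_def using M0 sq0 b0 w3 by simp
  have X2: "X ^ 2 = Q ^ 3 / w"
  proof -
    have "X ^ 2 = M ^ 2 * sq ^ 2 * (w - 1) ^ 2 * b ^ 2 / w ^ 4" unfolding X_def by (simp add: power_mult_distrib power_divide)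
    also have "\<dots> = M ^ 3 * (w - 1) ^ 3 / w ^ 4" unfolding sq2 b2 by (simp add: power2_eq_square power3_eq_cube)
    also have "\<dots> = M ^ 3 * (w - 1) ^ 3 / (w ^ 3 * w)" by (simp add: eval_nat_numeral)
    also have "\<dots> = Q ^ 3 / w" unfolding Q_def by (simp add: power_divide power_mult_distrib)
    finally show ?thesis .
  qed
  have "Q ^ 3 < P ^ 3" using PQ' Q0 by (intro power_strict_mono) auto
  also have "P ^ 3 \<le> l * C ^ 2" by fact
  also have "\<dots> \<le> w * C ^ 2" using lw unfolding w_def by (intro mult_right_mono) auto
  finally have "Q ^ 3 / w < C ^ 2" using w3 by (simp add: field_simps)
  then have "X ^ 2 < C ^ 2" using X2 by simp
  then have CX: "X < C" using C0 X0 by (simp add: power_less_imp_less_base)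
  have "P * w > M * (w - 1)" using PQ' w3 unfolding Q_def by (simp add: field_simps)
  moreover have "R * w = M * w - P * w" using PR by (simp add: algebra_simps flip: PR)
  ultimately have "R * w < M" by (simp add: algebra_simps)
  then have RM: "R < M / w" using w3 by (simp add: field_simps)
  have "sqrt R * R \<le> sqrt (M / w) * (M / w)"
    using RM R0 by (intro mult_mono) auto
  also have "sqrt (M / w) = sq / a" unfolding sq_def a_def by (simp add: real_sqrt_divide)
  finally have DR': "D \<ge> - (sq / a * (M / w))" using DR by linarith
  have T1: "T > X - sq / a * (M / w)" using CX DR' TCD by linarith
  have s20: "sqrt 2 > 0" by simp
  have Tb': "T \<le> M * sq * (3 / (sqrt 2 * 10.06 * a))"
  proof -
    have e: "sqrt (M/2) = sq / sqrt 2" unfolding sq_def by (simp add: real_sqrt_divide)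
    have "6 * ((M/2) * sqrt (M/2)) / (10.06 * sqrt (real k)) = M * sq * (3 / (sqrt 2 * 10.06 * a))"
      unfolding a_def w_def e using s20 by (simp add: field_simps)
    then show ?thesis using Tb by simp
  qed
  have key: "20.12 * sqrt 2 * ((w - 1) * sqrt (w * (w - 1)) - w) \<ge> 6 * w ^ 2"
    unfolding w_def by (rule key_num[OF k3])
  have ab: "sqrt (w * (w - 1)) = a * b" unfolding a_def b_def by (simp add: real_sqrt_mult)
  define G where "G = (w - 1) * b / w ^ 2 - 1 / (a * w) - 3 / (sqrt 2 * 10.06 * a)"
  have Gid: "G * (w ^ 2 * a) = (w - 1) * (a * b) - w - 3 * w ^ 2 / (sqrt 2 * 10.06)"
    unfolding G_def using a0 w3 s20 by (simp add: field_simps power2_eq_square)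
  have "(w - 1) * (a * b) - w - 3 * w ^ 2 / (sqrt 2 * 10.06) \<ge> 0"
  proof -
    have "(w - 1) * (a * b) - w \<ge> 6 * w ^ 2 / (20.12 * sqrt 2)" using key ab s20
      by (simp add: field_simps)
    moreover have "6 * w ^ 2 / (20.12 * sqrt 2) = 3 * w ^ 2 / (sqrt 2 * 10.06)" using s20 by (simp add: field_simps)
    ultimately show ?thesis by linarith
  qed
  then have "G * (w ^ 2 * a) \<ge> 0" using Gid by simp
  moreover have "w ^ 2 * a > 0" using a0 w3 by simp
  ultimately have G0: "G \<ge> 0" by (simp add: zero_le_mult_iff)
  have "X - sq / a * (M / w) - M * sq * (3 / (sqrt 2 * 10.06 * a)) = M * sq * G"
    unfolding X_def G_def using a0 w3 by (simp add: field_simps)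
  moreover have "M * sq * G \<ge> 0" using M0 sq0 G0 by simp
  ultimately show False using T1 Tb' by linarith
qed


lemma clique_facts:
  assumes "clique_number n E \<ge> 3"
  shows "num_edges n E > 0"
proof -
  let ?C = "{S. is_clique n E S}"
  have fin: "finite ?C" by (rule finite_subset[of _ "Pow {..<n}"]) (auto simp: is_clique_def)
  have ne: "{} \<in> ?C" by (simp add: is_clique_def)
  have "clique_number n E \<in> card ` ?C" unfolding clique_number_def
    using fin ne by (intro Max_in) auto
  then obtain S0 where S0: "S0 \<in> ?C" and Sc: "clique_number n E = card S0" by (rule imageE)
  define S where "S = S0"
  have S: "is_clique n E S" using S0 unfolding S_def by simp
  have c3: "card S \<ge> 3" using assms Sc unfolding S_def by simp
  have finS: "finite S" using S(1) unfolding is_clique_def using finite_subset by blast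
  have "S \<noteq> {}" using c3 by auto
  then obtain a where a: "a \<in> S" by blast
  have "card (S - {a}) \<ge> 2" using c3 a finS by simp
  then have "S - {a} \<noteq> {}" by (metis card.empty not_numeral_le_zero)
  then obtain b where b: "b \<in> S - {a}" by blast
  have ab: "a \<in> S" "b \<in> S" "a \<noteq> b" using a b by auto
  let ?i = "min a b" and ?j = "max a b"
  have "?i < ?j" "?j < n" "E ?i ?j" using S ab unfolding is_clique_def
    by (auto simp: min_def max_def)
  then have mem: "(?i, ?j) \<in> {(i,j). i < j \<and> j < n \<and> E i j}" by simp
  have fin2: "finite {(i,j). i < j \<and> j < n \<and> E i j}"
    by (rule finite_subset[of _ "{..<n} \<times> {..<n}"]) auto
  show ?thesis unfolding num_edges_def card_gt_0_iff using mem fin2 by blast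
qed


theorem mainTheorem3:
  fixes n :: nat and E :: "nat \<Rightarrow> nat \<Rightarrow> bool" and \<epsilon> c :: real
  assumes "simple_graph n E"
    and "\<epsilon> > 0" and "c > 0"
    and "clique_number n E \<ge> 3"
    and "real (num_triangles n E) \<le> c * real (num_edges n E) powr (1.5 - \<epsilon>)"
    and "real (num_edges n E) \<ge> (10.06 * c * sqrt (real (clique_number n E))) powr (1 / \<epsilon>)"
  shows "Lambda_k n E (min (n_pos n E) (clique_number n E))
           \<le> 2 * (1 - 1 / real (clique_number n E))"
proof -
  let ?A = "adj_matrix n E"
  let ?m = "num_edges n E" and ?t = "num_triangles n E" and ?w = "clique_number n E"
  have G: "simple_graph n E" using assms(1) .
  have A: "?A \<in> carrier_mat n n" by (simp add: adj_matrix_def)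
  have sym: "\<And>i j. i < n \<Longrightarrow> j < n \<Longrightarrow> ?A $$ (i,j) = ?A $$ (j,i)"
    using G by (simp add: adj_matrix_def simple_graph_def)
  obtain es where cp: "char_poly ?A = (\<Prod>a\<leftarrow>es. [:-a,1:])" and len: "length es = n"
    using sym_char_poly_split[OF A sym] by blast
  have pe: "proots (\<Prod>a\<leftarrow>es. [:-a,1::real:]) = mset es"
  proof (induction es)
    case (Cons a es)
    have nz0: "0 \<noteq> [:-x,1::real:]" for x by (metis one_neq_zero pCons_eq_0_iff)
    have nz: "(\<Prod>a\<leftarrow>es. [:-a,1::real:]) \<noteq> 0" unfolding prod_list_zero_iff set_map using nz0 by blast
    have "proots (\<Prod>a\<leftarrow>a # es. [:-a,1::real:]) = proots ([:-a,1:] * (\<Prod>a\<leftarrow>es. [:-a,1::real:]))"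
      by (simp only: list.map prod_list.Cons)
    also have "\<dots> = proots [:-a,1:] + proots (\<Prod>a\<leftarrow>es. [:-a,1::real:])"
      by (rule proots_mult[OF _ nz]) simp
    also have "\<dots> = {#a#} + mset es" using Cons.IH by simp
    finally show ?case by simp
  qed simp
  have em: "eig_mset n E = mset es" unfolding eig_mset_def cp pe ..
  define L where "L = eigs n E"
  let ?s = "sorted_list_of_multiset (mset es)"
  have Ls: "L = rev ?s" unfolding L_def eigs_def em ..
  have mL: "mset L = mset es" unfolding Ls by simp
  have lenL: "length L = n" using mL len by (metis size_mset)
  have ls: "length ?s = n" using lenL Ls by simp
  have sortL: "L ! j \<le> L ! i" if ij: "i \<le> j" "j < n" for i j
  proof -
    have "L ! i = ?s ! (n - Suc i)" "L ! j = ?s ! (n - Suc j)" using ij ls Ls by (simp_all add: rev_nth)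
    moreover have "?s ! (n - Suc j) \<le> ?s ! (n - Suc i)" using ij ls by (intro sorted_nth_mono) auto
    ultimately show ?thesis by simp
  qed
  have sumpow: "(\<Sum>i<n. (L ! i) ^ k) = tr (?A ^\<^sub>m k)" for k
  proof -
    have "(\<Sum>i<n. (L ! i) ^ k) = sum_list (map (\<lambda>x. x ^ k) L)"
      using lenL by (simp add: sum_list_sum_nth atLeast0LessThan)
    also have "\<dots> = sum_list (map (\<lambda>x. x ^ k) es)" by (simp only: sum_mset_sum_list[symmetric] mset_map mL)
    also have "\<dots> = tr (?A ^\<^sub>m k)" using tr_pow_eig[OF A cp, of k] by simp
    finally show ?thesis .
  qed
  have S2: "(\<Sum>i<n. (L ! i) ^ 2) = 2 * real ?m"
    using sumpow[of 2] tr_adj2[OF G] card_ordered_pairs[OF G] by simp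
  have S3: "(\<Sum>i<n. (L ! i) ^ 3) = 6 * real ?t"
    using sumpow[of 3] tr_adj3[OF G] card_ordered_triples[OF G] by simp
  have npos: "n_pos n E = length (filter (\<lambda>x. x > 0) L)"
    unfolding n_pos_def em mL[symmetric] by (simp only: mset_filter[symmetric] size_mset)
  have np_le: "n_pos n E \<le> n" using npos lenL length_filter_le[of "\<lambda>x. x > 0" L] by simp
  have pos: "L ! i > 0" if i: "i < n_pos n E" for i
  proof (rule ccontr)
    assume ni: "\<not> L ! i > 0"
    have "filter (\<lambda>x. x > 0) (drop i L) = []"
    proof (rule filter_False, intro ballI)
      fix x assume "x \<in> set (drop i L)"
      then obtain j where j: "j < length (drop i L)" "x = drop i L ! j" by (auto simp: in_set_conv_nth)
      then have "x = L ! (i + j)" "i + j < n" using lenL by auto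
      then have "x \<le> L ! i" using sortL[of i "i + j"] by simp
      then show "\<not> x > 0" using ni by simp
    qed
    moreover have "filter (\<lambda>x. x > 0) (take i L @ drop i L) = filter (\<lambda>x. x > 0) (take i L) @ filter (\<lambda>x. x > 0) (drop i L)"
      by (rule filter_append)
    ultimately have "filter (\<lambda>x. x > 0) L = filter (\<lambda>x. x > 0) (take i L)" by simp
    moreover have "length (filter (\<lambda>x. x > 0) (take i L)) \<le> i"
      using length_filter_le[of "\<lambda>x. x > 0" "take i L"] by simp
    ultimately have "length (filter (\<lambda>x. x > 0) L) \<le> i" by simp
    then show False using i npos by simp
  qed
  have m0: "?m > 0" using clique_facts assms(4) by blast
  have w3: "?w \<ge> 3" using assms(4) .
  define l where "l = min (n_pos n E) ?w"
  have ln: "l \<le> n" using np_le unfolding l_def by simp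
  have lw: "l \<le> ?w" unfolding l_def by simp
  have posl: "\<And>i. i < l \<Longrightarrow> L ! i > 0" using pos unfolding l_def by simp
  define P where "P = (\<Sum>i<l. (L ! i) ^ 2)"
  have goal: "P \<le> 2 * real ?m * (1 - 1 / real ?w)"
  proof (cases "l = 0")
    case True
    then have "P = 0" unfolding P_def by simp
    moreover have "2 * real ?m * (1 - 1 / real ?w) \<ge> 0" using w3 by simp
    ultimately show ?thesis by simp
  next
    case False
    define R where "R = (\<Sum>i\<in>{l..<n}. (L ! i) ^ 2)"
    define C where "C = (\<Sum>i<l. (L ! i) ^ 3)"
    define D where "D = (\<Sum>i\<in>{l..<n}. (L ! i) ^ 3)"
    have split: "(\<Sum>i<n. f i) = (\<Sum>i<l. f i) + (\<Sum>i\<in>{l..<n}. f i)" for f :: "nat \<Rightarrow> real"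
    proof -
      have "{..<n} = {..<l} \<union> {l..<n}" using ln by auto
      moreover have "sum f ({..<l} \<union> {l..<n}) = sum f {..<l} + sum f {l..<n}"
        by (rule sum.union_disjoint) auto
      ultimately show ?thesis by simp
    qed
    have PR: "P + R = 2 * real ?m" using split[of "\<lambda>i. (L ! i) ^ 2"] S2 unfolding P_def R_def by simp
    have CD: "6 * real ?t = C + D" using split[of "\<lambda>i. (L ! i) ^ 3"] S3 unfolding C_def D_def by simp
    have R0: "R \<ge> 0" unfolding R_def by (intro sum_nonneg) simp
    have C0: "C \<ge> 0" unfolding C_def using posl by (intro sum_nonneg) (simp add: less_imp_le)
    have PC: "P ^ 3 \<le> real l * C ^ 2" unfolding P_def C_def
      by (rule power_mean_3) (use posl in \<open>simp add: less_imp_le\<close>)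
    have DR: "D \<ge> - (sqrt R * R)" unfolding D_def R_def by (rule tail_cube) simp
    have l1: "1 \<le> real l" using False by simp
    have lw': "real l \<le> real ?w" using lw by simp
    define X where "X = 10.06 * c * sqrt (real ?w)"
    have X0: "X > 0" unfolding X_def using assms(3) w3 by simp
    have mr0: "real ?m > 0" using m0 by simp
    have "real ?m powr \<epsilon> \<ge> (X powr (1 / \<epsilon>)) powr \<epsilon>"
      using assms(6) unfolding X_def by (intro powr_mono2) (use assms(2) in auto)
    also have "(X powr (1 / \<epsilon>)) powr \<epsilon> = X" using assms(2) X0 by (simp add: powr_powr)
    finally have mX: "real ?m powr \<epsilon> \<ge> X" .
    have p15: "real ?m powr (1.5 - \<epsilon>) = real ?m * sqrt (real ?m) / real ?m powr \<epsilon>"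
    proof -
      have "real ?m powr (1.5 - \<epsilon>) = real ?m powr (1 + 1/2) / real ?m powr \<epsilon>"
        by (simp add: powr_diff)
      also have "real ?m powr (1 + 1/2) = real ?m powr 1 * real ?m powr (1/2)"
        by (rule powr_add)
      also have "\<dots> = real ?m * sqrt (real ?m)"
        using mr0 by (simp add: powr_half_sqrt)
      finally show ?thesis .
    qed
    have "real ?t \<le> c * (real ?m * sqrt (real ?m) / real ?m powr \<epsilon>)" using assms(5) p15 by simp
    also have "\<dots> \<le> c * (real ?m * sqrt (real ?m) / X)"
      using assms(3) mX X0 mr0 by (intro mult_left_mono divide_left_mono) auto
    also have "\<dots> = real ?m * sqrt (real ?m) / (10.06 * sqrt (real ?w))"
      unfolding X_def using assms(3) by simp
    finally have tb: "real ?t \<le> real ?m * sqrt (real ?m) / (10.06 * sqrt (real ?w))" .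
    have Tb: "6 * real ?t \<le> 6 * ((2 * real ?m / 2) * sqrt (2 * real ?m / 2)) / (10.06 * sqrt (real ?w))"
      using tb by simp
    have M0: "2 * real ?m > 0" using mr0 by simp
    show ?thesis
      using final_ineq[OF w3 M0 PR R0 C0 PC l1 lw' DR CD Tb] by simp
  qed
  have "P / real ?m \<le> (2 * real ?m * (1 - 1 / real ?w)) / real ?m"
    using goal m0 by (intro divide_right_mono) auto
  also have "\<dots> = 2 * (1 - 1 / real ?w)" using m0 by simp
  finally have "P / real ?m \<le> 2 * (1 - 1 / real ?w)" .
  then show ?thesis unfolding Lambda_k_def s_k_def l_def[symmetric] P_def L_def .
qed

end
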